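(* Let $A$ be a $\sigma$-unital $C^*$-algebra, $E_A$ a countably generated Hilbert $C^*$-module, $\gamma_0\in\operatorname{End}_A(E)$ a self-adjoint unitary and $u\in\operatorname{End}_A(E)$ a unitary with $\gamma_0u\gamma_0=u^*$. If $\|u+u^*\|_{\mathcal{Q}_A(E)}<2$, then $\frac{1}{2i}(u-u^* )$ is a self-adjoint Fredholm operator in $\operatorname{End}_A(E)$ that anti-commutes with $\gamma_0$.
   Context: $\operatorname{End}_A(E)$ denotes the adjointable operators and $\mathbb{K}_A(E)$ the compact operators. $\mathcal{Q}_A(E)=\operatorname{End}_A(E)/\mathbb{K}_A(E)$ with quotient $\pi$, and $\|S\|_{\mathcal{Q}_A(E)}=\|\pi(S)\|$. An operator $T\in\operatorname{End}_A(E)$ is Fredholm if $\pi(T)$ is invertible. *)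

theory Defs
  imports "HOL-Analysis.Analysis"
begin

text \<open>A C*-algebra: a (not necessarily unital) real Banach algebra with a compatible
complex scalar multiplication sm, and an involution st satisfying the C*-identity.\<close>
definition cstar_algebra ::
  "('a::{real_normed_algebra,banach} \<Rightarrow> 'a) \<Rightarrow> (complex \<Rightarrow> 'a \<Rightarrow> 'a) \<Rightarrow> bool" where
  "cstar_algebra st sm \<longleftrightarrow>
     (\<forall>r x. sm (complex_of_real r) x = scaleR r x) \<and>
     (\<forall>c d x. sm (c + d) x = sm c x + sm d x) \<and>
     (\<forall>c x y. sm c (x + y) = sm c x + sm c y) \<and>
     (\<forall>c d x. sm (c * d) x = sm c (sm d x)) \<and>
     (\<forall>c x y. sm c (x * y) = sm c x * y \<and> sm c (x * y) = x * sm c y) \<and>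
     (\<forall>c x. norm (sm c x) = cmod c * norm x) \<and>
     (\<forall>x. st (st x) = x) \<and>
     (\<forall>x y. st (x + y) = st x + st y) \<and>
     (\<forall>c x. st (sm c x) = sm (cnj c) (st x)) \<and>
     (\<forall>x y. st (x * y) = st y * st x) \<and>
     (\<forall>x. norm (st x * x) = (norm x)\<^sup>2)"

definition cstar_positive :: "('a::{real_normed_algebra,banach} \<Rightarrow> 'a) \<Rightarrow> 'a \<Rightarrow> bool" where
  "cstar_positive st x \<longleftrightarrow> (\<exists>y. x = st y * y)"

definition sigma_unital :: "('a::{real_normed_algebra,banach} \<Rightarrow> 'a) \<Rightarrow> bool" where
  "sigma_unital st \<longleftrightarrow>
     (\<exists>e :: nat \<Rightarrow> 'a. (\<forall>n. cstar_positive st (e n) \<and> norm (e n) \<le> 1) \<and>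
        (\<forall>a. (\<lambda>n. e n * a) \<longlonglongrightarrow> a \<and> (\<lambda>n. a * e n) \<longlonglongrightarrow> a))"

text \<open>A (right) Hilbert C*-module E over the C*-algebra A.  rm is the right action,
ip the A-valued inner product (linear in the second variable), smE the complex scalar
multiplication on E. Completeness of E is the class banach, with the norm induced by ip.\<close>
definition hilbert_module ::
  "('a::{real_normed_algebra,banach} \<Rightarrow> 'a) \<Rightarrow> (complex \<Rightarrow> 'a \<Rightarrow> 'a) \<Rightarrow>
   ('e::banach \<Rightarrow> 'a \<Rightarrow> 'e) \<Rightarrow> ('e \<Rightarrow> 'e \<Rightarrow> 'a) \<Rightarrow> (complex \<Rightarrow> 'e \<Rightarrow> 'e) \<Rightarrow> bool" where
  "hilbert_module st smA rm ip smE \<longleftrightarrow>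
     cstar_algebra st smA \<and>
     (\<forall>r x. smE (complex_of_real r) x = scaleR r x) \<and>
     (\<forall>c d x. smE (c + d) x = smE c x + smE d x) \<and>
     (\<forall>c x y. smE c (x + y) = smE c x + smE c y) \<and>
     (\<forall>c d x. smE (c * d) x = smE c (smE d x)) \<and>
     (\<forall>x y a. rm (x + y) a = rm x a + rm y a) \<and>
     (\<forall>x a b. rm x (a + b) = rm x a + rm x b) \<and>
     (\<forall>x a b. rm x (a * b) = rm (rm x a) b) \<and>
     (\<forall>c x a. rm (smE c x) a = smE c (rm x a)) \<and>
     (\<forall>c x a. rm x (smA c a) = smE c (rm x a)) \<and>
     (\<forall>x y z. ip x (y + z) = ip x y + ip x z) \<and>
     (\<forall>c x y. ip x (smE c y) = smA c (ip x y)) \<and>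
     (\<forall>x y a. ip x (rm y a) = ip x y * a) \<and>
     (\<forall>x y. st (ip x y) = ip y x) \<and>
     (\<forall>x. cstar_positive st (ip x x)) \<and>
     (\<forall>x. ip x x = 0 \<longrightarrow> x = 0) \<and>
     (\<forall>x. norm x = sqrt (norm (ip x x)))"

definition countably_generated :: "('e::banach \<Rightarrow> 'a \<Rightarrow> 'e) \<Rightarrow> bool" where
  "countably_generated rm \<longleftrightarrow>
     (\<exists>G. countable G \<and> closure (span {rm g a | g a. g \<in> G}) = UNIV)"

definition adjointable :: "('e \<Rightarrow> 'e \<Rightarrow> 'a) \<Rightarrow> ('e \<Rightarrow> 'e) \<Rightarrow> bool" where
  "adjointable ip T \<longleftrightarrow> (\<exists>T'. \<forall>x y. ip (T x) y = ip x (T' y))"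

definition adjoint :: "('e \<Rightarrow> 'e \<Rightarrow> 'a) \<Rightarrow> ('e \<Rightarrow> 'e) \<Rightarrow> ('e \<Rightarrow> 'e)" where
  "adjoint ip T = (SOME T'. \<forall>x y. ip (T x) y = ip x (T' y))"

definition unitary_op :: "('e \<Rightarrow> 'e \<Rightarrow> 'a) \<Rightarrow> ('e \<Rightarrow> 'e) \<Rightarrow> bool" where
  "unitary_op ip u \<longleftrightarrow> adjointable ip u \<and>
     (\<forall>x. adjoint ip u (u x) = x) \<and> (\<forall>x. u (adjoint ip u x) = x)"

definition selfadjoint_op :: "('e \<Rightarrow> 'e \<Rightarrow> 'a) \<Rightarrow> ('e \<Rightarrow> 'e) \<Rightarrow> bool" where
  "selfadjoint_op ip T \<longleftrightarrow> adjointable ip T \<and> adjoint ip T = T"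

definition finite_rank_op :: "('e \<Rightarrow> 'a \<Rightarrow> 'e) \<Rightarrow> ('e \<Rightarrow> 'e \<Rightarrow> 'a) \<Rightarrow> ('e::real_normed_vector \<Rightarrow> 'e) \<Rightarrow> bool" where
  "finite_rank_op rm ip F \<longleftrightarrow>
     (\<exists>xs :: ('e \<times> 'e) list. F = (\<lambda>z. sum_list (map (\<lambda>(x, y). rm x (ip y z)) xs)))"

definition compact_op :: "('e \<Rightarrow> 'a \<Rightarrow> 'e) \<Rightarrow> ('e \<Rightarrow> 'e \<Rightarrow> 'a) \<Rightarrow> ('e::real_normed_vector \<Rightarrow> 'e) \<Rightarrow> bool" where
  "compact_op rm ip T \<longleftrightarrow> adjointable ip T \<and>
     (\<forall>\<epsilon>>0. \<exists>F. finite_rank_op rm ip F \<and> onorm (\<lambda>z. T z - F z) < \<epsilon>)"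

definition calkin_norm :: "('e \<Rightarrow> 'a \<Rightarrow> 'e) \<Rightarrow> ('e \<Rightarrow> 'e \<Rightarrow> 'a) \<Rightarrow> ('e::real_normed_vector \<Rightarrow> 'e) \<Rightarrow> real" where
  "calkin_norm rm ip S = Inf {onorm (\<lambda>z. S z + K z) | K. compact_op rm ip K}"

definition fredholm_op :: "('e \<Rightarrow> 'a \<Rightarrow> 'e) \<Rightarrow> ('e \<Rightarrow> 'e \<Rightarrow> 'a) \<Rightarrow> ('e::real_normed_vector \<Rightarrow> 'e) \<Rightarrow> bool" where
  "fredholm_op rm ip T \<longleftrightarrow> adjointable ip T \<and>
     (\<exists>S. adjointable ip S \<and> compact_op rm ip (\<lambda>x. S (T x) - x) \<and> compact_op rm ip (\<lambda>x. T (S x) - x))"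

end

theory Submission
  imports Defs
begin


definition frk :: "('e \<Rightarrow> 'a \<Rightarrow> 'e) \<Rightarrow> ('e \<Rightarrow> 'e \<Rightarrow> 'a) \<Rightarrow> ('e \<times> 'e) list \<Rightarrow> 'e \<Rightarrow> ('e::real_normed_vector)"
  where "frk rm ip xs z = sum_list (map (\<lambda>(x, y). rm x (ip y z)) xs)"

lemma finite_rank_frk: "finite_rank_op rm ip F \<longleftrightarrow> (\<exists>xs. F = frk rm ip xs)"
  unfolding finite_rank_op_def frk_def by (simp add: fun_eq_iff)

lemma frk_Nil[simp]: "frk rm ip [] z = 0"
  by (simp add: frk_def)

lemma frk_Cons: "frk rm ip ((x, y) # xs) z = rm x (ip y z) + frk rm ip xs z"
  by (simp add: frk_def)

lemma frk_append: "frk rm ip (xs @ ys) z = frk rm ip xs z + frk rm ip ys z"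
  by (simp add: frk_def)

locale hm =
  fixes st :: "'a::{real_normed_algebra,banach} \<Rightarrow> 'a"
    and smA :: "complex \<Rightarrow> 'a \<Rightarrow> 'a"
    and rm :: "'e::banach \<Rightarrow> 'a \<Rightarrow> 'e"
    and ip :: "'e \<Rightarrow> 'e \<Rightarrow> 'a"
    and smE :: "complex \<Rightarrow> 'e \<Rightarrow> 'e"
  assumes H: "hilbert_module st smA rm ip smE"
begin

lemma smA_real: "smA (complex_of_real r) x = r *\<^sub>R x"
  and smA_addc: "smA (c + d) x = smA c x + smA d x"
  and smA_add: "smA c (x + y) = smA c x + smA c y"
  and smA_mult: "smA (c * d) x = smA c (smA d x)"
  and smA_norm: "norm (smA c x) = cmod c * norm x"
  and st_st: "st (st x) = x"
  and st_add: "st (x + y) = st x + st y"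
  and st_sm: "st (smA c x) = smA (cnj c) (st x)"
  and st_mult: "st (x * y) = st y * st x"
  and cstar: "norm (st x * x) = (norm x)\<^sup>2"
  using H unfolding hilbert_module_def cstar_algebra_def by auto

lemma smE_real: "smE (complex_of_real r) x = r *\<^sub>R x"
  and smE_addc: "smE (c + d) x = smE c x + smE d x"
  and smE_add: "smE c (x + y) = smE c x + smE c y"
  and smE_mult: "smE (c * d) x = smE c (smE d x)"
  and rm_add1: "rm (x + y) a = rm x a + rm y a"
  and rm_add2: "rm x (a + b) = rm x a + rm x b"
  and rm_mult: "rm x (a * b) = rm (rm x a) b"
  and rm_sm1: "rm (smE c x) a = smE c (rm x a)"
  and rm_sm2: "rm x (smA c a) = smE c (rm x a)"
  and ip_add2: "ip x (y + z) = ip x y + ip x z"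
  and ip_sm2: "ip x (smE c y) = smA c (ip x y)"
  and ip_rm2: "ip x (rm y a) = ip x y * a"
  and st_ip: "st (ip x y) = ip y x"
  and ip_nondeg: "ip x x = 0 \<Longrightarrow> x = 0"
  and normE: "norm x = sqrt (norm (ip x x))"
  using H unfolding hilbert_module_def by auto

lemma st_zero: "st 0 = 0"
  using st_add[of 0 0] by simp

lemma st_scaleR: "st (r *\<^sub>R x) = r *\<^sub>R st x"
  using st_sm[of "complex_of_real r" x] by (simp add: smA_real)

lemma st_minus: "st (- x) = - st x"
proof -
  have "st x + st (- x) = 0" using st_add[of x "-x"] st_zero by simp
  from minus_unique[OF this] show ?thesis by simp
qed

lemma st_diff: "st (x - y) = st x - st y"
  using st_add[of x "-y"] st_minus by simp

lemma norm_st_ge: "norm x \<le> norm (st x)"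
proof (cases "x = 0")
  case False
  have "(norm x)\<^sup>2 \<le> norm (st x) * norm x"
    using cstar[of x] norm_mult_ineq[of "st x" x] by simp
  then show ?thesis using False by (simp add: power2_eq_square)
qed simp

lemma norm_st: "norm (st x) = norm x"
  using norm_st_ge[of x] norm_st_ge[of "st x"] st_st[of x] by simp

lemma smA_zero: "smA c 0 = 0"
  using smA_add[of c 0 0] by simp

lemma smA_minus: "smA c (- x) = - smA c x"
proof -
  have "smA c x + smA c (- x) = 0" using smA_add[of c x "-x"] smA_zero by simp
  from minus_unique[OF this] show ?thesis by simp
qed

lemma smA_diff: "smA c (x - y) = smA c x - smA c y"
  using smA_add[of c x "-y"] smA_minus by simp

lemma smA_negc: "smA (- c) x = - smA c x"
proof -
  have "smA c x + smA (- c) x = 0"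
    using smA_addc[of c "- c" x] smA_real[of 0 x] by simp
  from minus_unique[OF this] show ?thesis by simp
qed

lemma smA_one: "smA 1 x = x"
  using smA_real[of 1 x] by simp

lemma ip_zero2: "ip x 0 = 0"
  using ip_add2[of x 0 0] by simp

lemma ip_minus2: "ip x (- y) = - ip x y"
proof -
  have "ip x y + ip x (- y) = 0" using ip_add2[of x y "-y"] ip_zero2 by simp
  from minus_unique[OF this] show ?thesis by simp
qed

lemma ip_diff2: "ip x (y - z) = ip x y - ip x z"
  using ip_add2[of x y "-z"] ip_minus2 by simp

lemma ip_add1: "ip (x + y) z = ip x z + ip y z"
  by (metis st_ip st_add ip_add2)

lemma ip_zero1: "ip 0 x = 0"
  by (metis st_ip ip_zero2 st_zero)

lemma ip_minus1: "ip (- y) x = - ip y x"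
  by (metis st_ip ip_minus2 st_minus)

lemma ip_diff1: "ip (y - z) x = ip y x - ip z x"
  by (metis st_ip ip_diff2 st_diff)

lemma ip_sm1: "ip (smE c x) y = smA (cnj c) (ip x y)"
  by (metis st_ip ip_sm2 st_sm)

lemma ip_scaleR2: "ip x (r *\<^sub>R y) = r *\<^sub>R ip x y"
  by (metis smE_real smA_real ip_sm2)

lemma ip_scaleR1: "ip (r *\<^sub>R y) x = r *\<^sub>R ip y x"
  by (metis st_ip ip_scaleR2 st_scaleR)

lemma ip_rm1: "ip (rm x a) y = st a * ip x y"
  by (metis st_ip ip_rm2 st_mult)

lemma st_ipxx: "st (ip x x) = ip x x"
  by (simp add: st_ip)

lemma norm_ip_self: "norm (ip x x) = (norm x)\<^sup>2"
  using normE[of x] by simp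

lemma ip_ext: assumes "\<And>w. ip w p = ip w q" shows "p = q"
proof -
  have "ip (p - q) (p - q) = 0"
    using assms[of "p - q"] by (simp add: ip_diff2)
  then show ?thesis using ip_nondeg by fastforce
qed

lemma smE_zero: "smE c 0 = 0"
  using smE_add[of c 0 0] by simp

lemma smE_minus: "smE c (- x) = - smE c x"
proof -
  have "smE c x + smE c (- x) = 0" using smE_add[of c x "-x"] smE_zero by simp
  from minus_unique[OF this] show ?thesis by simp
qed

lemma smE_diff: "smE c (x - y) = smE c x - smE c y"
  using smE_add[of c x "-y"] smE_minus by simp

lemma norm_smE: "norm (smE c x) = cmod c * norm x"
proof -
  have "ip (smE c x) (smE c x) = smA (c * cnj c) (ip x x)"
    by (simp add: ip_sm1 ip_sm2 smA_mult mult.commute)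
  also have "c * cnj c = complex_of_real ((cmod c)\<^sup>2)"
    by (rule complex_norm_square[symmetric])
  finally have "norm (ip (smE c x) (smE c x)) = (cmod c)\<^sup>2 * norm (ip x x)"
    by (simp add: smA_norm norm_power)
  then have "(norm (smE c x))\<^sup>2 = (cmod c * norm x)\<^sup>2"
    by (simp add: norm_ip_self power_mult_distrib)
  then show ?thesis
    by (simp add: power2_eq_iff_nonneg)
qed

lemma norm_rm: "norm (rm x a) \<le> norm x * norm a"
proof -
  have "ip (rm x a) (rm x a) = st a * ip x x * a"
    by (simp add: ip_rm1 ip_rm2 mult.assoc)
  moreover have "norm (st a * ip x x * a) \<le> norm (st a * ip x x) * norm a"
    by (rule norm_mult_ineq)
  moreover have "norm (st a * ip x x) * norm a \<le> norm (st a) * norm (ip x x) * norm a"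
    by (intro mult_right_mono norm_mult_ineq) simp
  ultimately have "norm (ip (rm x a) (rm x a)) \<le> norm a * (norm x)\<^sup>2 * norm a"
    by (simp add: norm_st norm_ip_self)
  then have "(norm (rm x a))\<^sup>2 \<le> (norm x * norm a)\<^sup>2"
    by (simp add: norm_ip_self power2_eq_square algebra_simps)
  then show ?thesis
    by (simp add: power2_le_iff_abs_le)
qed

lemma weak_cs0: "norm (ip x y) \<le> (norm x + norm y)\<^sup>2 + (norm x)\<^sup>2 + (norm y)\<^sup>2"
proof -
  define s where "s = (\<lambda>x y. ip x y + ip y x)"
  have s_eq: "s x y = ip (x + y) (x + y) - ip x x - ip y y" for x y
    by (simp add: s_def ip_add1 ip_add2 algebra_simps)
  have s_bd: "norm (s x y) \<le> (norm x + norm y)\<^sup>2 + (norm x)\<^sup>2 + (norm y)\<^sup>2" for x y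
  proof -
    have "norm (s x y) \<le> norm (ip (x + y) (x + y) - ip x x) + norm (ip y y)"
      unfolding s_eq by (rule norm_triangle_ineq4)
    also have "\<dots> \<le> norm (ip (x + y) (x + y)) + norm (ip x x) + norm (ip y y)"
      using norm_triangle_ineq4 by simp
    also have "\<dots> \<le> (norm x + norm y)\<^sup>2 + (norm x)\<^sup>2 + (norm y)\<^sup>2"
      unfolding norm_ip_self
      by (simp add: norm_triangle_ineq power_mono)
    finally show ?thesis .
  qed
  have "s x (smE \<i> y) = smA \<i> (ip x y) - smA \<i> (ip y x)"
    by (simp add: s_def ip_sm1 ip_sm2 smA_negc)
  then have "smA (- \<i>) (s x (smE \<i> y)) = ip x y - ip y x"
    by (simp add: smA_diff smA_mult[symmetric] smA_one)
  then have "2 *\<^sub>R ip x y = s x y + smA (- \<i>) (s x (smE \<i> y))"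
    by (simp add: s_def scaleR_2)
  then have "2 * norm (ip x y) = norm (s x y + smA (- \<i>) (s x (smE \<i> y)))"
    by (metis norm_scaleR abs_numeral)
  also have "\<dots> \<le> norm (s x y) + norm (smA (- \<i>) (s x (smE \<i> y)))"
    by (rule norm_triangle_ineq)
  also have "\<dots> = norm (s x y) + norm (s x (smE \<i> y))"
    by (simp add: smA_norm)
  also have "\<dots> \<le> 2 * ((norm x + norm y)\<^sup>2 + (norm x)\<^sup>2 + (norm y)\<^sup>2)"
    using s_bd[of x y] s_bd[of x "smE \<i> y"] by (simp add: norm_smE)
  finally show ?thesis by simp
qed

lemma weak_cs: "norm (ip x y) \<le> 6 * norm x * norm y"
proof (cases "x = 0 \<or> y = 0")
  case True then show ?thesis by (auto simp: ip_zero1 ip_zero2)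
next
  case False
  define a where "a = norm x" define b where "b = norm y"
  have ab: "a > 0" "b > 0" using False by (auto simp: a_def b_def)
  have "ip x y = (a * b) *\<^sub>R ip ((1/a) *\<^sub>R x) ((1/b) *\<^sub>R y)"
    using ab by (simp add: ip_scaleR1 ip_scaleR2)
  moreover have "norm (ip ((1/a) *\<^sub>R x) ((1/b) *\<^sub>R y)) \<le> 6"
    using weak_cs0[of "(1/a) *\<^sub>R x" "(1/b) *\<^sub>R y"] ab by (simp add: a_def b_def)
  ultimately have "norm (ip x y) \<le> (a * b) * 6"
    using ab by (simp add: mult_left_mono)
  then show ?thesis by (simp add: a_def b_def algebra_simps)
qed


abbreviation adj :: "('e \<Rightarrow> 'e) \<Rightarrow> ('e \<Rightarrow> 'e) \<Rightarrow> bool" where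
  "adj T T' \<equiv> (\<forall>x y. ip (T x) y = ip x (T' y))"

lemma adj_swap: assumes "adj T T'" shows "ip a (T b) = ip (T' a) b"
proof -
  have "ip a (T b) = st (ip (T b) a)" by (simp add: st_ip)
  also have "\<dots> = st (ip b (T' a))" using assms by simp
  also have "\<dots> = ip (T' a) b" by (simp add: st_ip)
  finally show ?thesis .
qed

lemma adj_sym: "adj T T' \<Longrightarrow> adj T' T"
  using adj_swap by metis

lemma adjointable_iff: "adjointable ip T \<longleftrightarrow> (\<exists>T'. adj T T')"
  unfolding adjointable_def by simp

lemma adjoint_adj: assumes "adjointable ip T" shows "adj T (adjoint ip T)"
  using someI_ex[OF assms[unfolded adjointable_def]] unfolding adjoint_def .

lemma adj_unique: assumes "adj T T1" "adj T T2" shows "T1 = T2"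
proof (rule ext, rule ip_ext)
  fix x w show "ip w (T1 x) = ip w (T2 x)"
    using assms by (metis (no_types))
qed

lemma adjoint_eq: "adj T T' \<Longrightarrow> adjoint ip T = T'"
  using adj_unique adjoint_adj adjointable_iff by blast

lemma adj_add: assumes "adj T T'" shows "T (x + y) = T x + T y"
proof (rule ip_ext)
  fix w
  show "ip w (T (x + y)) = ip w (T x + T y)"
    by (simp add: adj_swap[OF assms] ip_add2)
qed

lemma adj_scaleR: assumes "adj T T'" shows "T (r *\<^sub>R x) = r *\<^sub>R T x"
proof (rule ip_ext)
  fix w
  show "ip w (T (r *\<^sub>R x)) = ip w (r *\<^sub>R T x)"
    by (simp add: adj_swap[OF assms] ip_scaleR2)
qed

lemma adj_smE: assumes "adj T T'" shows "T (smE c x) = smE c (T x)"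
proof (rule ip_ext)
  fix w
  show "ip w (T (smE c x)) = ip w (smE c (T x))"
    by (simp add: adj_swap[OF assms] ip_sm2)
qed

lemma adj_rm: assumes "adj T T'" shows "T (rm x a) = rm (T x) a"
proof (rule ip_ext)
  fix w
  show "ip w (T (rm x a)) = ip w (rm (T x) a)"
    by (simp add: adj_swap[OF assms] ip_rm2)
qed

lemma adj_linear: assumes "adj T T'" shows "linear T"
  by (rule linearI) (use adj_add[OF assms] adj_scaleR[OF assms] in auto)

lemma adj_zero: assumes "adj T T'" shows "T 0 = 0"
  using linear_0[OF adj_linear[OF assms]] .

lemma adj_diff: assumes "adj T T'" shows "T (x - y) = T x - T y"
  using linear_diff[OF adj_linear[OF assms]] .

lemma adj_minus: assumes "adj T T'" shows "T (- x) = - T x"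
  using linear_neg[OF adj_linear[OF assms]] .

lemma bl_ip2: "bounded_linear (\<lambda>y. ip x y)"
proof (rule bounded_linear_intro[where K="6 * norm x"])
  show "norm (ip x y) \<le> norm y * (6 * norm x)" for y
    using weak_cs[of x y] by (simp add: mult_ac)
qed (auto simp: ip_add2 ip_scaleR2)

lemma bl_ip1: "bounded_linear (\<lambda>x. ip x y)"
proof (rule bounded_linear_intro[where K="6 * norm y"])
  show "norm (ip x y) \<le> norm x * (6 * norm y)" for x
    using weak_cs[of x y] by (simp add: mult_ac)
qed (auto simp: ip_add1 ip_scaleR1)

lemma adj_bounded: assumes A: "adj T T'" shows "bounded_linear T"
proof -
  define F where "F n = {y. \<forall>x. norm x \<le> 1 \<longrightarrow> norm (ip (T x) y) \<le> real n}" for n :: nat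
  have clF: "closed (F n)" for n
  proof -
    have "F n = (\<Inter>x\<in>{x. norm x \<le> 1}. {y. norm (ip (T x) y) \<le> real n})"
      by (auto simp: F_def)
    moreover have "closed {y. norm (ip (T x) y) \<le> real n}" for x
      by (intro closed_Collect_le continuous_intros
          linear_continuous_on bl_ip2)
    ultimately show ?thesis by auto
  qed
  have covF: "(\<Union>n. F n) = UNIV"
  proof (rule set_eqI, rule iffI)
    fix y :: 'e
    obtain n :: nat where n: "6 * norm (T' y) \<le> real n"
      using real_arch_simple by blast
    have "y \<in> F n"
      unfolding F_def
    proof (intro CollectI allI impI)
      fix x :: 'e assume "norm x \<le> 1"
      have "norm (ip (T x) y) = norm (ip x (T' y))" using A by simp
      also have "\<dots> \<le> 6 * norm x * norm (T' y)" by (rule weak_cs)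
      also have "\<dots> \<le> 6 * 1 * norm (T' y)"
        using \<open>norm x \<le> 1\<close> by (intro mult_right_mono) auto
      finally show "norm (ip (T x) y) \<le> real n" using n by simp
    qed
    then show "y \<in> (\<Union>n. F n)" by blast
  qed simp
  have "\<exists>n. interior (F n) \<noteq> {}"
  proof (rule ccontr)
    assume "\<not> ?thesis"
    then have "euclidean interior_of \<Union>(range F) = {}"
      by (intro Baire_category_alt)
         (auto simp: completely_metrizable_space_euclidean clF)
    then show False using covF by simp
  qed
  then obtain n y0 where "y0 \<in> interior (F n)" by blast
  moreover have "open (interior (F n))" by simp
  ultimately obtain r where r0: "r > 0" "ball y0 r \<subseteq> interior (F n)"
    using open_contains_ball by blast
  then have r: "r > 0" "ball y0 r \<subseteq> F n"
    using interior_subset by blast+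
  have bd1: "norm (ip (T x) z) \<le> 2 * real n" if "norm x \<le> 1" "norm z < r" for x z
  proof -
    have "y0 + z \<in> F n" "y0 \<in> F n" using r that by (auto simp: dist_norm)
    then have "norm (ip (T x) (y0 + z)) \<le> real n" "norm (ip (T x) y0) \<le> real n"
      using that by (auto simp: F_def)
    moreover have eq: "ip (T x) z = ip (T x) (y0 + z) - ip (T x) y0"
      by (simp add: ip_add2)
    moreover have "norm (ip (T x) z) \<le> norm (ip (T x) (y0 + z)) + norm (ip (T x) y0)"
      unfolding eq by (rule norm_triangle_ineq4)
    ultimately show ?thesis by linarith
  qed
  have bd2: "norm (T x) \<le> 4 * real n / r" if "norm x \<le> 1" for x
  proof (cases "T x = 0")
    case False
    define t where "t = r / (2 * norm (T x))"
    have tpos: "t > 0" using False r by (simp add: t_def)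
    have "norm (t *\<^sub>R T x) < r" using False r by (simp add: t_def)
    then have "norm (ip (T x) (t *\<^sub>R T x)) \<le> 2 * real n" using bd1 that by blast
    then have "t * (norm (T x))\<^sup>2 \<le> 2 * real n"
      using tpos by (simp add: ip_scaleR2 norm_ip_self)
    then have "r * norm (T x) / 2 \<le> 2 * real n"
      using False by (simp add: t_def power2_eq_square)
    then show ?thesis using r by (simp add: field_simps)
  qed (use r in simp)
  show ?thesis
  proof (rule bounded_linear_intro[where K="4 * real n / r"])
    show "T (x + y) = T x + T y" for x y by (rule adj_add[OF A])
    show "T (c *\<^sub>R x) = c *\<^sub>R T x" for c x by (rule adj_scaleR[OF A])
    show "norm (T x) \<le> norm x * (4 * real n / r)" for x
    proof (cases "x = 0")
      case True then show ?thesis using adj_zero[OF A] by simp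
    next
      case False
      have "T x = norm x *\<^sub>R T ((1 / norm x) *\<^sub>R x)"
        using False by (simp add: adj_scaleR[OF A])
      then have "norm (T x) = norm x * norm (T ((1 / norm x) *\<^sub>R x))"
        by (metis norm_scaleR abs_norm_cancel)
      also have "\<dots> \<le> norm x * (4 * real n / r)"
        using False by (intro mult_left_mono bd2) simp_all
      finally show ?thesis .
    qed
  qed
qed


lemma adj_comp: "adj A A' \<Longrightarrow> adj B B' \<Longrightarrow> adj (\<lambda>x. A (B x)) (\<lambda>y. B' (A' y))"
  by simp

lemma adj_plus: "adj A A' \<Longrightarrow> adj B B' \<Longrightarrow> adj (\<lambda>x. A x + B x) (\<lambda>y. A' y + B' y)"
  by (simp add: ip_add1 ip_add2)

lemma adj_scal: "adj A A' \<Longrightarrow> adj (\<lambda>x. r *\<^sub>R A x) (\<lambda>y. r *\<^sub>R A' y)"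
  by (simp add: ip_scaleR1 ip_scaleR2)

lemma adj_neg: "adj A A' \<Longrightarrow> adj (\<lambda>x. - A x) (\<lambda>y. - A' y)"
  by (simp add: ip_minus1 ip_minus2)

lemma adj_id: "adj (\<lambda>x. x) (\<lambda>x. x)"
  by simp

lemma adj_smEc: "adj (\<lambda>x. smE c x) (\<lambda>y. smE (cnj c) y)"
  by (simp add: ip_sm1 ip_sm2)

lemma adj_0: "adj (\<lambda>x. 0) (\<lambda>x. 0)"
  by (simp add: ip_zero1 ip_zero2)

lemma bl_rm: "bounded_linear (\<lambda>a. rm x a)"
proof (rule bounded_linear_intro[where K="norm x"])
  show "rm x (a + b) = rm x a + rm x b" for a b by (rule rm_add2)
  show "rm x (r *\<^sub>R a) = r *\<^sub>R rm x a" for r a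
    by (metis smA_real smE_real rm_sm2)
  show "norm (rm x a) \<le> norm a * norm x" for a
    using norm_rm[of x a] by (simp add: mult.commute)
qed

lemma frk_bl: "bounded_linear (frk rm ip xs)"
proof (induction xs)
  case Nil
  have "frk rm ip [] = (\<lambda>z. 0)" by (simp add: fun_eq_iff)
  then show ?case by simp
next
  case (Cons p xs)
  obtain x y where p: "p = (x, y)" by fastforce
  have e: "frk rm ip (p # xs) = (\<lambda>z. rm x (ip y z) + frk rm ip xs z)"
    by (simp add: fun_eq_iff p frk_Cons)
  have "bounded_linear (\<lambda>z. rm x (ip y z))"
    using bounded_linear_compose[OF bl_rm bl_ip2] .
  then show ?case unfolding e using Cons.IH by (intro bounded_linear_add)
qed

lemma frk_right: assumes "adj B B'"
  shows "frk rm ip xs (B z) = frk rm ip (map (\<lambda>(x, y). (x, B' y)) xs) z"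
  by (induction xs) (auto simp: frk_Cons adj_swap[OF assms])

lemma frk_left: assumes "adj B B'"
  shows "B (frk rm ip xs z) = frk rm ip (map (\<lambda>(x, y). (B x, y)) xs) z"
  by (induction xs) (auto simp: frk_Cons adj_add[OF assms] adj_rm[OF assms] adj_zero[OF assms])

lemma compact_iff: "compact_op rm ip K \<longleftrightarrow> (\<exists>K'. adj K K') \<and>
   (\<forall>e>0. \<exists>xs. onorm (\<lambda>z. K z - frk rm ip xs z) < e)"
proof -
  have "(\<exists>F. finite_rank_op rm ip F \<and> onorm (\<lambda>z. K z - F z) < e) \<longleftrightarrow>
        (\<exists>xs. onorm (\<lambda>z. K z - frk rm ip xs z) < e)" for e
    unfolding finite_rank_frk by blast
  then show ?thesis unfolding compact_op_def adjointable_iff by simp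
qed

lemma cpt_bl: "compact_op rm ip K \<Longrightarrow> bounded_linear K"
  unfolding compact_iff using adj_bounded by blast

lemma cpt_zero: "compact_op rm ip (\<lambda>x. 0)"
  unfolding compact_iff
proof (intro conjI allI impI)
  show "\<exists>K'. adj (\<lambda>x. 0) K'"
    by (rule exI[where x="\<lambda>y. 0"]) (rule adj_0)
  fix e :: real assume "e > 0"
  then show "\<exists>xs. onorm (\<lambda>z. 0 - frk rm ip xs z) < e"
    by (intro exI[of _ "[]"]) (simp add: onorm_zero)
qed

lemma cpt_add: assumes "compact_op rm ip K1" "compact_op rm ip K2"
  shows "compact_op rm ip (\<lambda>x. K1 x + K2 x)"
  unfolding compact_iff
proof (intro conjI allI impI)
  obtain A B where a: "adj K1 A" and b: "adj K2 B" using assms unfolding compact_iff by blast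
  show "\<exists>K'. adj (\<lambda>x. K1 x + K2 x) K'"
    by (rule exI[where x="\<lambda>y. A y + B y"]) (rule adj_plus[OF a b])
  fix e :: real assume "e > 0"
  then obtain xs ys where xs: "onorm (\<lambda>z. K1 z - frk rm ip xs z) < e/2"
    and ys: "onorm (\<lambda>z. K2 z - frk rm ip ys z) < e/2"
    using assms unfolding compact_iff by (meson half_gt_zero)
  have bl1: "bounded_linear (\<lambda>z. K1 z - frk rm ip xs z)"
    by (intro bounded_linear_sub cpt_bl[OF assms(1)] frk_bl)
  have bl2: "bounded_linear (\<lambda>z. K2 z - frk rm ip ys z)"
    by (intro bounded_linear_sub cpt_bl[OF assms(2)] frk_bl)
  have "(\<lambda>z. K1 z + K2 z - frk rm ip (xs @ ys) z) =
        (\<lambda>z. (K1 z - frk rm ip xs z) + (K2 z - frk rm ip ys z))"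
    by (simp add: fun_eq_iff frk_append algebra_simps)
  then have "onorm (\<lambda>z. K1 z + K2 z - frk rm ip (xs @ ys) z) \<le>
     onorm (\<lambda>z. K1 z - frk rm ip xs z) + onorm (\<lambda>z. K2 z - frk rm ip ys z)"
    using onorm_triangle[OF bl1 bl2] by simp
  then show "\<exists>zs. onorm (\<lambda>z. K1 z + K2 z - frk rm ip zs z) < e"
    using xs ys by (intro exI[of _ "xs @ ys"]) linarith
qed

lemma cpt_left: assumes "compact_op rm ip K" "adj B B'"
  shows "compact_op rm ip (\<lambda>x. B (K x))"
  unfolding compact_iff
proof (intro conjI allI impI)
  obtain A where A: "adj K A" using assms unfolding compact_iff by blast
  show "\<exists>K'. adj (\<lambda>x. B (K x)) K'"
    by (rule exI[where x="\<lambda>y. A (B' y)"]) (rule adj_comp[OF assms(2) A])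
  fix e :: real assume e: "e > 0"
  have blB: "bounded_linear B" using adj_bounded[OF assms(2)] .
  define d where "d = e / (onorm B + 1)"
  have nB: "onorm B \<ge> 0" using onorm_pos_le[OF blB] .
  have d: "d > 0" using e nB by (simp add: d_def)
  then obtain xs where xs: "onorm (\<lambda>z. K z - frk rm ip xs z) < d"
    using assms unfolding compact_iff by blast
  have bl1: "bounded_linear (\<lambda>z. K z - frk rm ip xs z)"
    by (intro bounded_linear_sub cpt_bl[OF assms(1)] frk_bl)
  have "(\<lambda>z. B (K z) - frk rm ip (map (\<lambda>(x, y). (B x, y)) xs) z) =
        B \<circ> (\<lambda>z. K z - frk rm ip xs z)"
    by (simp add: fun_eq_iff frk_left[OF assms(2), symmetric] adj_diff[OF assms(2)])
  then have "onorm (\<lambda>z. B (K z) - frk rm ip (map (\<lambda>(x, y). (B x, y)) xs) z)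
      \<le> onorm B * onorm (\<lambda>z. K z - frk rm ip xs z)"
    using onorm_compose[OF blB bl1] by simp
  also have "\<dots> \<le> onorm B * d"
    using xs nB by (intro mult_left_mono) auto
  also have "\<dots> < e"
    using e nB by (simp add: d_def field_simps)
  finally show "\<exists>zs. onorm (\<lambda>z. B (K z) - frk rm ip zs z) < e" by blast
qed

lemma cpt_right: assumes "compact_op rm ip K" "adj B B'"
  shows "compact_op rm ip (\<lambda>x. K (B x))"
  unfolding compact_iff
proof (intro conjI allI impI)
  obtain A where A: "adj K A" using assms unfolding compact_iff by blast
  show "\<exists>K'. adj (\<lambda>x. K (B x)) K'"
    by (rule exI[where x="\<lambda>y. B' (A y)"]) (rule adj_comp[OF A assms(2)])
  fix e :: real assume e: "e > 0"
  have blB: "bounded_linear B" using adj_bounded[OF assms(2)] .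
  define d where "d = e / (onorm B + 1)"
  have nB: "onorm B \<ge> 0" using onorm_pos_le[OF blB] .
  have d: "d > 0" using e nB by (simp add: d_def)
  then obtain xs where xs: "onorm (\<lambda>z. K z - frk rm ip xs z) < d"
    using assms unfolding compact_iff by blast
  have bl1: "bounded_linear (\<lambda>z. K z - frk rm ip xs z)"
    by (intro bounded_linear_sub cpt_bl[OF assms(1)] frk_bl)
  have "(\<lambda>z. K (B z) - frk rm ip (map (\<lambda>(x, y). (x, B' y)) xs) z) =
        (\<lambda>z. K z - frk rm ip xs z) \<circ> B"
    by (simp add: fun_eq_iff frk_right[OF assms(2), symmetric])
  then have "onorm (\<lambda>z. K (B z) - frk rm ip (map (\<lambda>(x, y). (x, B' y)) xs) z)
      \<le> onorm (\<lambda>z. K z - frk rm ip xs z) * onorm B"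
    using onorm_compose[OF bl1 blB] by simp
  also have "\<dots> \<le> d * onorm B"
    using xs nB by (intro mult_right_mono) auto
  also have "\<dots> < e"
    using e nB by (simp add: d_def field_simps)
  finally show "\<exists>zs. onorm (\<lambda>z. K (B z) - frk rm ip zs z) < e" by blast
qed

lemma cpt_neg: assumes "compact_op rm ip K" shows "compact_op rm ip (\<lambda>x. - K x)"
  using cpt_left[OF assms adj_neg[OF adj_id]] .

lemma cpt_diff: assumes "compact_op rm ip K1" "compact_op rm ip K2"
  shows "compact_op rm ip (\<lambda>x. K1 x - K2 x)"
  using cpt_add[OF assms(1) cpt_neg[OF assms(2)]] by simp

lemma cpt_cong: "compact_op rm ip K \<Longrightarrow> (\<And>x. K x = K2 x) \<Longrightarrow> compact_op rm ip K2"
proof -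
  assume "compact_op rm ip K" "\<And>x. K x = K2 x"
  moreover have "K = K2" using calculation(2) by (rule ext)
  ultimately show ?thesis by simp
qed


lemma adj_pow: assumes "adj X X'" shows "adj (X ^^ n) (X' ^^ n)"
proof (induction n)
  case 0 then show ?case by simp
next
  case (Suc n)
  show ?case using adj_comp[OF assms Suc] by (simp add: funpow_swap1)
qed

lemma neumann:
  assumes W: "adj W W'" and q: "onorm W < 1"
  shows "\<exists>V V'. adj V V' \<and> (\<forall>x. V (x - W (W x)) = x) \<and> (\<forall>x. V x - W (W (V x)) = x)"
proof -
  define X where "X = (\<lambda>x. W (W x))"
  define X' where "X' = (\<lambda>y. W' (W' y))"
  have aX: "adj X X'" unfolding X_def X'_def using adj_comp[OF W W] by simp
  have blW: "bounded_linear W" using adj_bounded[OF W] .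
  have blX: "bounded_linear X" using adj_bounded[OF aX] .
  define q where "q = (onorm W)\<^sup>2"
  have q0: "q \<ge> 0" "q < 1" using onorm_pos_le[OF blW] q
    by (auto simp: q_def abs_square_less_1)
  have nX: "norm (X x) \<le> q * norm x" for x
  proof -
    have "norm (W (W x)) \<le> onorm W * norm (W x)" by (rule onorm[OF blW])
    also have "\<dots> \<le> onorm W * (onorm W * norm x)"
      by (intro mult_left_mono onorm[OF blW] onorm_pos_le[OF blW])
    finally show ?thesis by (simp add: X_def q_def power2_eq_square mult.assoc)
  qed
  have nXn: "norm ((X ^^ n) x) \<le> q ^ n * norm x" for n x
  proof (induction n)
    case 0 then show ?case by simp
  next
    case (Suc n)
    have "norm ((X ^^ Suc n) x) \<le> q * norm ((X ^^ n) x)" using nX by simp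
    also have "\<dots> \<le> q * (q ^ n * norm x)" using Suc q0 by (intro mult_left_mono) auto
    finally show ?case by simp
  qed
  have aXn: "adj (X ^^ n) (X' ^^ n)" for n using adj_pow[OF aX] .
  have nX'n: "norm ((X' ^^ n) y) \<le> 6 * q ^ n * norm y" for n y
  proof (cases "(X' ^^ n) y = 0")
    case False
    have "(norm ((X' ^^ n) y))\<^sup>2 = norm (ip ((X' ^^ n) y) ((X' ^^ n) y))"
      by (simp add: norm_ip_self)
    also have "ip ((X' ^^ n) y) ((X' ^^ n) y) = ip ((X ^^ n) ((X' ^^ n) y)) y"
      using aXn[of n] by simp
    also have "norm \<dots> \<le> 6 * norm ((X ^^ n) ((X' ^^ n) y)) * norm y"
      by (rule weak_cs)
    also have "\<dots> \<le> 6 * (q ^ n * norm ((X' ^^ n) y)) * norm y"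
      by (intro mult_right_mono mult_left_mono nXn) auto
    finally have "(norm ((X' ^^ n) y))\<^sup>2 \<le> (6 * q ^ n * norm y) * norm ((X' ^^ n) y)"
      by (simp add: mult_ac)
    then show ?thesis using False by (simp add: power2_eq_square)
  qed (simp add: q0)
  have sumg: "summable (\<lambda>n. c * q ^ n)" for c
    using q0 by (intro summable_mult summable_geometric) simp
  have sX: "summable (\<lambda>n. (X ^^ n) x)" for x
    by (rule summable_comparison_test[OF _ sumg[of "norm x"]])
       (use nXn in \<open>auto simp: mult.commute\<close>)
  have sX': "summable (\<lambda>n. (X' ^^ n) y)" for y
    by (rule summable_comparison_test[OF _ sumg[of "6 * norm y"]])
       (use nX'n in \<open>auto simp: mult_ac\<close>)
  define V where "V x = (\<Sum>n. (X ^^ n) x)" for x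
  define V' where "V' y = (\<Sum>n. (X' ^^ n) y)" for y
  have aV: "adj V V'"
  proof (intro allI)
    fix x y
    have "ip (V x) y = (\<Sum>n. ip ((X ^^ n) x) y)"
      unfolding V_def using bounded_linear.suminf[OF bl_ip1 sX] .
    also have "\<dots> = (\<Sum>n. ip x ((X' ^^ n) y))"
      using aXn by simp
    also have "\<dots> = ip x (V' y)"
      unfolding V'_def using bounded_linear.suminf[OF bl_ip2 sX', symmetric] .
    finally show "ip (V x) y = ip x (V' y)" .
  qed
  have shift: "(\<Sum>n. (X ^^ Suc n) x) = V x - x" for x
    using suminf_split_head[OF sX[of x]] by (simp add: V_def)
  have e1: "V (x - X x) = x" for x
  proof -
    have "V (X x) = (\<Sum>n. (X ^^ Suc n) x)"
      unfolding V_def by (simp add: funpow_Suc_right del: funpow.simps)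
    then show ?thesis using adj_diff[OF aV] shift by simp
  qed
  have e2: "V x - X (V x) = x" for x
  proof -
    have "X (V x) = (\<Sum>n. X ((X ^^ n) x))"
      unfolding V_def using bounded_linear.suminf[OF blX sX] .
    also have "\<dots> = (\<Sum>n. (X ^^ Suc n) x)" by simp
    finally show ?thesis using shift by simp
  qed
  show ?thesis using aV e1 e2 unfolding X_def by blast
qed

lemma fredholm_main:
  assumes T: "adj T T'" and K: "compact_op rm ip Kc" and W: "adj W W'" and q: "onorm W < 1"
    and TT: "\<And>x. T (T x) = x - W (W x) + Kc x"
  shows "fredholm_op rm ip T"
proof -
  obtain V V' where V: "adj V V'" and e1: "\<And>x. V (x - W (W x)) = x"
    and e2: "\<And>x. V x - W (W (V x)) = x"
    using neumann[OF W q] by blast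
  have L: "V (T (T w)) = w + V (Kc w)" for w
    using TT[of w] e1[of w] adj_add[OF V] by simp
  have R: "T (T (V z)) = z + Kc (V z)" for z
    using TT[of "V z"] e2[of z] by (simp add: algebra_simps)
  have key: "T (V (T z)) - z = Kc (V z) + T (V (Kc (T (V z)))) - T (V (T (Kc (V z))))" for z
  proof -
    have "V (T (T (T (V z)))) = T (V z) + V (Kc (T (V z)))" using L .
    moreover have "V (T (T (T (V z)))) = V (T z) + V (T (Kc (V z)))"
      using R[of z] adj_add[OF T] adj_add[OF V] by simp
    ultimately have "V (T z) = T (V z) + V (Kc (T (V z))) - V (T (Kc (V z)))"
      by (simp add: algebra_simps)
    then have "T (V (T z)) = T (T (V z)) + T (V (Kc (T (V z)))) - T (V (T (Kc (V z))))"
      using adj_add[OF T] adj_diff[OF T] by simp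
    then show ?thesis using R[of z] by (simp add: algebra_simps)
  qed
  have c1: "compact_op rm ip (\<lambda>x. V (T (T x)) - x)"
    by (rule cpt_cong[OF cpt_left[OF K V]]) (simp add: L)
  have c2: "compact_op rm ip (\<lambda>x. T (V (T x)) - x)"
  proof (rule cpt_cong)
    show "compact_op rm ip (\<lambda>z. Kc (V z) + T (V (Kc (T (V z)))) - T (V (T (Kc (V z)))))"
      by (intro cpt_add cpt_diff cpt_right[OF K V] cpt_left[OF _ T] cpt_left[OF _ V]
          cpt_right[OF _ T] cpt_right[OF _ V] cpt_left[OF cpt_right[OF K V]] K)
  qed (use key in simp)
  have aS: "adjointable ip (\<lambda>x. V (T x))"
    unfolding adjointable_iff by (rule exI[where x="\<lambda>y. T' (V' y)"]) (rule adj_comp[OF V T])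
  have aT: "adjointable ip T"
    unfolding adjointable_iff by (rule exI[where x=T']) (rule T)
  show ?thesis
    unfolding fredholm_op_def using aS aT c1 c2 by blast
qed

end

theorem proposition4p18:
  fixes st :: "'a::{real_normed_algebra,banach} \<Rightarrow> 'a"
    and smA :: "complex \<Rightarrow> 'a \<Rightarrow> 'a"
    and rm :: "'e::banach \<Rightarrow> 'a \<Rightarrow> 'e"
    and ip :: "'e \<Rightarrow> 'e \<Rightarrow> 'a"
    and smE :: "complex \<Rightarrow> 'e \<Rightarrow> 'e"
    and \<gamma>0 u :: "'e \<Rightarrow> 'e"
  assumes "hilbert_module st smA rm ip smE"
    and "sigma_unital st"
    and "countably_generated rm"
    and "selfadjoint_op ip \<gamma>0" and "unitary_op ip \<gamma>0"
    and "unitary_op ip u"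
    and "\<forall>x. \<gamma>0 (u (\<gamma>0 x)) = adjoint ip u x"
    and "calkin_norm rm ip (\<lambda>x. u x + adjoint ip u x) < 2"
  shows "selfadjoint_op ip (\<lambda>x. smE (1 / (2 * \<i>)) (u x - adjoint ip u x)) \<and>
         fredholm_op rm ip (\<lambda>x. smE (1 / (2 * \<i>)) (u x - adjoint ip u x)) \<and>
         (\<forall>x. \<gamma>0 (smE (1 / (2 * \<i>)) (u x - adjoint ip u x))
               = - smE (1 / (2 * \<i>)) (u (\<gamma>0 x) - adjoint ip u (\<gamma>0 x)))"
proof -
  interpret hm st smA rm ip smE using assms(1) by unfold_locales
  define U' where "U' = adjoint ip u"
  have aU: "adj u U'" using assms(6) adjoint_adj unfolding unitary_op_def U'_def by blast
  have aU': "adj U' u" using adj_sym[OF aU] .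
  have uU: "\<And>x. U' (u x) = x" "\<And>x. u (U' x) = x"
    using assms(6) unfolding unitary_op_def U'_def by auto
  have ag: "adj \<gamma>0 \<gamma>0"
    using assms(4) adjoint_adj unfolding selfadjoint_op_def by metis
  have gg: "\<gamma>0 (\<gamma>0 x) = x" for x
    using assms(4,5) unfolding selfadjoint_op_def unitary_op_def by metis
  have hyp: "\<gamma>0 (u (\<gamma>0 x)) = U' x" for x using assms(7) unfolding U'_def by blast
  define c where "c = 1 / (2 * \<i>)"
  have cc: "cnj c = - c" by (simp add: c_def)
  have c2: "c * c = complex_of_real (- 1 / 4)"
    by (simp add: c_def field_simps)
  define T where "T = (\<lambda>x. smE c (u x - U' x))"
  have aT: "adj T T"
  proof (intro allI)
    fix x y
    show "ip (T x) y = ip x (T y)"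
      unfolding T_def
      by (simp add: ip_sm1 ip_sm2 ip_diff1 ip_diff2 cc smA_negc smA_diff
          adj_swap[OF aU] adj_swap[OF aU'] del: complex_cnj_divide)
  qed
  have P1: "selfadjoint_op ip T"
    unfolding selfadjoint_op_def adjointable_iff
    using aT adjoint_eq[OF aT] by blast
  have P3: "\<gamma>0 (T x) = - T (\<gamma>0 x)" for x
  proof -
    have g1: "\<gamma>0 (u x) = U' (\<gamma>0 x)" using hyp[of "\<gamma>0 x"] gg by simp
    have g2: "\<gamma>0 (U' x) = u (\<gamma>0 x)" using hyp[of x] gg by metis
    show ?thesis
      unfolding T_def by (simp add: adj_smE[OF ag] adj_diff[OF ag] g1 g2 smE_diff)
  qed
  define P where "P = (\<lambda>z. u z + U' z)"
  have aP: "adj P (\<lambda>y. U' y + u y)" unfolding P_def using adj_plus[OF aU aU'] .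
  have ne: "{onorm (\<lambda>z. P z + K z) | K. compact_op rm ip K} \<noteq> {}"
    using cpt_zero by blast
  obtain K where cK: "compact_op rm ip K" and nK: "onorm (\<lambda>z. P z + K z) < 2"
    using cInf_lessD[OF ne] assms(8) unfolding calkin_norm_def P_def U'_def by blast
  obtain K' where aK: "adj K K'" using cK unfolding compact_iff by blast
  define W where "W = (\<lambda>z. (1/2::real) *\<^sub>R (P z + K z))"
  have aPK: "adj (\<lambda>z. P z + K z) (\<lambda>y. (U' y + u y) + K' y)"
    using adj_plus[OF aP aK] .
  have aW: "adj W (\<lambda>y. (1/2::real) *\<^sub>R ((U' y + u y) + K' y))"
    unfolding W_def using adj_scal[OF aPK] .
  have qW: "onorm W < 1"
    unfolding W_def using onorm_scaleR[OF adj_bounded[OF aPK], of "1/2"] nK by simp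
  define R where "R = (\<lambda>z. (1/2::real) *\<^sub>R P z)"
  have aR: "adj R (\<lambda>y. (1/2::real) *\<^sub>R (U' y + u y))"
    unfolding R_def using adj_scal[OF aP] .
  define K2 where "K2 = (\<lambda>z. (1/2::real) *\<^sub>R K z)"
  have cK2: "compact_op rm ip K2"
    unfolding K2_def using cpt_left[OF cK adj_scal[OF adj_id]] .
  define Kc where "Kc = (\<lambda>x. W (K2 x) + K2 (R x))"
  have cKc: "compact_op rm ip Kc"
    unfolding Kc_def by (intro cpt_add cpt_left[OF cK2 aW] cpt_right[OF cK2 aR])
  have Wsplit: "W y = R y + K2 y" for y
    by (simp add: W_def R_def K2_def scaleR_right_distrib)
  have WW: "W (W x) = R (R x) + K2 (R x) + W (K2 x)" for x
    using Wsplit[of x] Wsplit[of "R x"] adj_add[OF aW] by simp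
  have TR: "T (T x) = x - R (R x)" for x
  proof -
    have e1: "u (T x) = smE c (u (u x) - x)"
      unfolding T_def by (simp add: adj_smE[OF aU] adj_diff[OF aU] uU)
    have e2: "U' (T x) = smE c (x - U' (U' x))"
      unfolding T_def by (simp add: adj_smE[OF aU'] adj_diff[OF aU'] uU)
    have Tapp: "T y = smE c (u y - U' y)" for y by (simp add: T_def)
    have "T (T x) = smE (c * c) (u (u x) - x - (x - U' (U' x)))"
      by (simp only: Tapp[of "T x"] e1 e2) (simp add: smE_mult smE_diff)
    also have "\<dots> = (- 1 / 4) *\<^sub>R (u (u x) - x - (x - U' (U' x)))"
      by (simp only: c2 smE_real)
    finally have t: "T (T x) = (- 1 / 4) *\<^sub>R (u (u x) - x - (x - U' (U' x)))" .
    have Rapp: "R y = (1/2::real) *\<^sub>R (u y + U' y)" for y by (simp add: R_def P_def)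
    have r1: "u (R x) = (1/2::real) *\<^sub>R (u (u x) + x)"
      unfolding R_def P_def by (simp add: adj_scaleR[OF aU] adj_add[OF aU] uU)
    have r2: "U' (R x) = (1/2::real) *\<^sub>R (x + U' (U' x))"
      unfolding R_def P_def by (simp add: adj_scaleR[OF aU'] adj_add[OF aU'] uU)
    have "R (R x) = (1/2::real) *\<^sub>R ((1/2::real) *\<^sub>R (u (u x) + x) + (1/2::real) *\<^sub>R (x + U' (U' x)))"
      by (simp only: Rapp[of "R x"] r1 r2)
    moreover have q4: "(1/4::real) *\<^sub>R x + ((1/4::real) *\<^sub>R x + ((1/4::real) *\<^sub>R x + (1/4::real) *\<^sub>R x)) = x"
    proof -
      have "(1/4::real) *\<^sub>R x + ((1/4::real) *\<^sub>R x + ((1/4::real) *\<^sub>R x + (1/4::real) *\<^sub>R x))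
          = ((1/4) + ((1/4) + ((1/4) + (1/4::real)))) *\<^sub>R x"
        by (simp only: scaleR_add_left)
      then show ?thesis by simp
    qed
    ultimately show ?thesis unfolding t by (simp add: algebra_simps)
  qed
  have TT: "T (T x) = x - W (W x) + Kc x" for x
    unfolding TR WW Kc_def by simp
  have P2: "fredholm_op rm ip T"
    using fredholm_main[OF aT cKc aW qW TT] .
  show ?thesis
    using P1 P2 P3 unfolding T_def c_def U'_def by simp
qed

end
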